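(* Let $d,a,b$ be positive integers, $r=(d+2b)/d$, $R=(a+d)/d$, with $R\ge3r$, and let $\rho=x_1-r$ with $x_1$ as in the context. If $t\in\mathbb C$ satisfies $\mathrm{Re}(t)>1$, $\mathrm{Im}(t)\ge0$ and $|t-r|>\rho$, then $\Phi(t)<0$.
   Context: For $t\in\mathbb C\setminus\{\pm1,\pm r\}$ let $\Phi(t)=d\log|t+r|-d\log|t-r|+(a+d)(\log|t-1|-\log|t+1|)$. Under $R\ge3r$ there is a unique $x_1\in(r,\infty)$ with $\Phi(x_1)=0$. *)

theory Defs
  imports Complex_Main
begin

definition rpar :: "nat \<Rightarrow> nat \<Rightarrow> real" where
  "rpar d b = (real d + 2 * real b) / real d"

definition Rpar :: "nat \<Rightarrow> nat \<Rightarrow> real" where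
  "Rpar d a = (real a + real d) / real d"

definition Phi :: "nat \<Rightarrow> nat \<Rightarrow> nat \<Rightarrow> complex \<Rightarrow> real" where
  "Phi d a b t =
     real d * ln (cmod (t + complex_of_real (rpar d b)))
   - real d * ln (cmod (t - complex_of_real (rpar d b)))
   + (real a + real d) * (ln (cmod (t - 1)) - ln (cmod (t + 1)))"

end

theory Submission imports Defs begin


lemma ln_lower2:
  fixes X :: real assumes "1 \<le> X" shows "2*(X-1)/(X+1) \<le> ln X"
proof -
  have "(\<lambda>X. ln X - 2*(X-1)/(X+1)) 1 \<le> (\<lambda>X. ln X - 2*(X-1)/(X+1)) X"
  proof (rule DERIV_nonneg_imp_nondecreasing[OF assms])
    fix z :: real assume z: "1 \<le> z" "z \<le> X"
    have d: "((\<lambda>X. ln X - 2*(X-1)/(X+1)) has_real_derivative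
       (1/z - ((0*(z-1) + (1-0)*2)*(z+1) - 2*(z-1)*(1+0))/((z+1)*(z+1)))) (at z)"
      using z by (intro derivative_eq_intros refl) auto
    have "1/z - ((0*(z-1) + (1-0)*2)*(z+1) - 2*(z-1)*(1+0))/((z+1)*(z+1)) = (z-1)^2/(z*(z+1)^2)"
    proof -
      have "z > 0" "z+1 > 0" using z by auto
      then show ?thesis by (simp add: divide_simps power2_eq_square) (simp add: algebra_simps)
    qed
    also have "\<dots> \<ge> 0" using z by simp
    finally show "\<exists>y. ((\<lambda>X. ln X - 2*(X-1)/(X+1)) has_real_derivative y) (at z) \<and> y \<ge> 0"
      using d by blast
  qed
  then show ?thesis by simp
qed

lemma ln_bern:
  fixes a r :: real assumes "0 \<le> a" "1 \<le> r" shows "ln (1 + r*a) \<le> r * ln (1+a)"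
proof -
  have la: "a/(1+a) \<le> ln (1+a)"
  proof -
    have "ln (1/(1+a)) \<le> 1/(1+a) - 1" using assms by (intro ln_le_minus_one) simp
    then show ?thesis using assms by (simp add: ln_div field_simps)
  qed
  have "(\<lambda>p. p * ln (1+a) - ln (1+p*a)) 1 \<le> (\<lambda>p. p * ln (1+a) - ln (1+p*a)) r"
  proof (rule DERIV_nonneg_imp_nondecreasing[OF assms(2)])
    fix z :: real assume z: "1 \<le> z" "z \<le> r"
    have pos: "0 < 1 + z*a" using z assms by (simp add: add_pos_nonneg)
    have d: "((\<lambda>p. p * ln (1+a) - ln (1+p*a)) has_real_derivative (ln (1+a) - a/(1+z*a))) (at z)"
      using pos by (auto intro!: derivative_eq_intros simp: field_simps)
    have "a/(1+z*a) \<le> a/(1+a)" using z assms by (intro divide_left_mono) (use mult_right_mono[of 1 z a] pos in auto)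
    then have "ln (1+a) - a/(1+z*a) \<ge> 0" using la by linarith
    then show "\<exists>y. ((\<lambda>p. p * ln (1+a) - ln (1+p*a)) has_real_derivative y) (at z) \<and> y \<ge> 0"
      using d by blast
  qed
  then show ?thesis by simp
qed



lemma K_dec:
  fixes y c1 c2 :: real assumes "0 < c1" "c1 < c2" "c2 < y"
  shows "(y^2-c2^2)/c2 * (ln(y+c2) - ln(y-c2)) < (y^2-c1^2)/c1 * (ln(y+c1) - ln(y-c1))"
proof -
  have "(\<lambda>c. (y^2-c^2)/c * (ln(y+c) - ln(y-c))) c1 > (\<lambda>c. (y^2-c^2)/c * (ln(y+c) - ln(y-c))) c2"
  proof (rule DERIV_neg_imp_decreasing[OF assms(2)])
    fix z :: real assume z: "c1 \<le> z" "z \<le> c2"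
    have z0: "0 < z" "z < y" using z assms by auto
    define L where "L = ln(y+z) - ln(y-z)"
    have d: "((\<lambda>c. (y^2-c^2)/c * (ln(y+c) - ln(y-c))) has_real_derivative
        (-(y^2+z^2)/z^2 * L + 2*y/z)) (at z)"
      using z0 unfolding L_def
      apply (intro derivative_eq_intros refl)
      apply (auto simp: )
      apply (simp add: divide_simps power2_eq_square)
      apply (simp add: algebra_simps)
      done
    have X1: "1 \<le> (y+z)/(y-z)" using z0 by (simp add: field_simps)
    have "2*((y+z)/(y-z)-1)/((y+z)/(y-z)+1) = 2*z/y" using z0 by (simp add: field_simps)
    moreover have "ln ((y+z)/(y-z)) = L" using z0 unfolding L_def by (simp add: ln_div)
    ultimately have LL: "2*z/y \<le> L" using ln_lower2[OF X1] by simp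
    have "(y^2+z^2)/z^2 * (2*z/y) \<le> (y^2+z^2)/z^2 * L" using LL z0 by (intro mult_left_mono) auto
    moreover have "(y^2+z^2)/z^2 * (2*z/y) = 2*y/z + 2*z/y" using z0 by (simp add: field_simps power2_eq_square)
    moreover have "2*z/y > 0" using z0 by simp
    moreover have "-(y^2+z^2)/z^2 * L = - ((y^2+z^2)/z^2 * L)" by (simp only: minus_divide_left[symmetric] mult_minus_left)
    ultimately have "-(y^2+z^2)/z^2 * L + 2*y/z < 0" by linarith
    then show "\<exists>D. ((\<lambda>c. (y^2-c^2)/c * (ln(y+c) - ln(y-c))) has_real_derivative D) (at z) \<and> D < 0"
      using d by blast
  qed
  then show ?thesis by simp
qed

lemma m_dec:
  fixes r y1 y2 :: real assumes "1 < r" "r < y1" "y1 < y2"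
  shows "(ln(y2+r)-ln(y2-r))/(ln(y2+1)-ln(y2-1)) < (ln(y1+r)-ln(y1-r))/(ln(y1+1)-ln(y1-1))"
proof -
  have "(\<lambda>y. (ln(y+r)-ln(y-r))/(ln(y+1)-ln(y-1))) y1 > (\<lambda>y. (ln(y+r)-ln(y-r))/(ln(y+1)-ln(y-1))) y2"
  proof (rule DERIV_neg_imp_decreasing[OF assms(3)])
    fix z :: real assume z: "y1 \<le> z" "z \<le> y2"
    have z0: "r < z" "1 < z" using z assms by auto
    define Lr where "Lr = ln(z+r)-ln(z-r)"
    define L1 where "L1 = ln(z+1)-ln(z-1)"
    have L1p: "L1 > 0" unfolding L1_def using z0 by simp
    have Lrp: "Lr > 0" unfolding Lr_def using z0 assms by simp
    have d: "((\<lambda>y. (ln(y+r)-ln(y-r))/(ln(y+1)-ln(y-1))) has_real_derivative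
        (((1/(z+r) - 1/(z-r)) * L1 - Lr * (1/(z+1) - 1/(z-1))) / (L1*L1))) (at z)"
      using z0 assms L1p unfolding L1_def Lr_def
      apply (intro derivative_eq_intros refl)
      apply simp_all
      apply simp_all
      done
    have K: "(z^2-r^2)/r * Lr < (z^2-1^2)/1 * L1"
      using K_dec[of 1 r z] z0 assms unfolding Lr_def L1_def by simp
    have zz: "z*z > r*r" using z0 assms by (intro mult_strict_mono) auto
    have e1: "1/(z+r) - 1/(z-r) = -2*r/(z^2-r^2)" using z0 assms zz
      by (simp add: divide_simps power2_eq_square) (simp add: algebra_simps)
    have zz1: "z*z > 1*1" using z0 by (intro mult_strict_mono) auto
    have e2: "1/(z+1) - 1/(z-1) = -2/(z^2-1)" using z0 zz1
      by (simp add: divide_simps power2_eq_square) (simp add: algebra_simps)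
    have p1: "z^2-r^2 > 0" "z^2 - 1 > 0" using z0 assms
      by (simp_all add: power_strict_mono)
    have "(z^2-r^2)/r * Lr * r < (z^2-1^2)/1 * L1 * r" using K assms by (intro mult_strict_right_mono) auto
    then have k2: "(z^2-r^2)*Lr < r*((z^2-1)*L1)" using assms by (simp add: mult.commute)
    have "Lr/(z^2-1) < r*L1/(z^2-r^2)"
    proof -
      have "Lr/(z^2-1) = ((z^2-r^2)*Lr)/((z^2-1)*(z^2-r^2))" using p1 by simp
      also have "\<dots> < (r*((z^2-1)*L1))/((z^2-1)*(z^2-r^2))" using k2 p1 by (intro divide_strict_right_mono) auto
      also have "\<dots> = r*L1/(z^2-r^2)" using p1 by simp
      finally show ?thesis .
    qed
    then have h: "2*(Lr/(z^2-1) - r*L1/(z^2-r^2)) < 0" by simp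
    have eq: "(-2*r/(z^2-r^2)) * L1 - Lr * (-2/(z^2-1)) = 2*(Lr/(z^2-1) - r*L1/(z^2-r^2))"
      by (simp add: algebra_simps)
    have "(1/(z+r) - 1/(z-r)) * L1 - Lr * (1/(z+1) - 1/(z-1)) < 0"
      unfolding e1 e2 eq using h .
    then have "((1/(z+r) - 1/(z-r)) * L1 - Lr * (1/(z+1) - 1/(z-1))) / (L1*L1) < 0"
      using L1p by (simp add: divide_neg_pos)
    then show "\<exists>D. ((\<lambda>y. (ln(y+r)-ln(y-r))/(ln(y+1)-ln(y-1))) has_real_derivative D) (at z) \<and> D < 0"
      using d by blast
  qed
  then show ?thesis by simp
qed



lemma g_neg:
  fixes r R x1 y :: real
  assumes "1 < r" "r < x1" "x1 < y"
    and h: "ln(x1+r)-ln(x1-r) = R*(ln(x1+1)-ln(x1-1))"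
  shows "ln(y+r)-ln(y-r) < R*(ln(y+1)-ln(y-1))"
proof -
  have p1: "ln(x1+1)-ln(x1-1) > 0" using assms by simp
  have p2: "ln(y+1)-ln(y-1) > 0" using assms by simp
  have "(ln(y+r)-ln(y-r))/(ln(y+1)-ln(y-1)) < (ln(x1+r)-ln(x1-r))/(ln(x1+1)-ln(x1-1))"
    using m_dec assms by blast
  also have "\<dots> = R" using h p1 by simp
  finally show ?thesis using p2 by (simp add: divide_simps)
qed

lemma kquad:
  fixes r R s D x x0 :: real
  assumes "D = s^2 - (r^2-1)"
  shows "x0 * (r*(s^2 + 2*(r-1)*x - (r^2-1))*(s^2 + 2*(r+1)*x - (r^2-1)) - R*D*(s^2+4*r*x))
       - x * (r*(s^2 + 2*(r-1)*x0 - (r^2-1))*(s^2 + 2*(r+1)*x0 - (r^2-1)) - R*D*(s^2+4*r*x0))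
       = 4*r*(r-1)*(r+1) * x * x0 * (x - x0) + D*(r*D - R*s^2) * (x0 - x)"
  unfolding assms by (simp add: algebra_simps power2_eq_square)



lemma frac_aux:
  fixes a b c A B C R :: real
  assumes "A \<noteq> 0" "B \<noteq> 0" "C \<noteq> 0"
  shows "(a/A + R*(b/B - c/C))*(A*B*C) = a*B*C + R*(b*C - c*B)*A"
  using assms by (simp add: field_simps)

lemma divaux: fixes y p w :: real shows "p \<noteq> 0 \<Longrightarrow> y*p = w \<Longrightarrow> y = w/p"
  by (simp add: field_simps)

lemma circle:
  fixes r R s x0 :: real
  assumes r1: "1 < r" and R: "3*r \<le> R" and s: "0 < s" and x0: "1 < x0" "x0 \<le> r+s"
    and Qx0: "0 < s^2 + 2*(r-1)*x0 - (r^2-1)"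
    and gneg: "ln(r+s+r) - ln s < R*(ln(r+s+1) - ln(r+s-1))"
  shows "ln(s^2+4*r*x0) - ln(s^2) + R*(ln(s^2 + 2*(r-1)*x0 - (r^2-1)) - ln(s^2 + 2*(r+1)*x0 - (r^2-1))) < 0"
proof -
  define Q where "Q x = s^2 + 2*(r-1)*x - (r^2-1)" for x
  define P where "P x = s^2 + 2*(r+1)*x - (r^2-1)" for x
  define D where "D = s^2 - (r^2-1)"
  define k where "k x = r*Q x*P x - R*D*(s^2+4*r*x)" for x
  define f where "f x = ln(s^2+4*r*x) - ln(s^2) + R*(ln(Q x) - ln(P x))" for x
  have PQ: "P x = Q x + 4*x" for x unfolding P_def Q_def by (simp add: algebra_simps)
  have Qmono: "Q x \<le> Q y" if "x \<le> y" for x y unfolding Q_def using that r1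
    using mult_left_mono[of x y "2*(r-1)"] by simp
  have kid: "x0' * k x - x * k x0' = 4*r*(r-1)*(r+1) * x * x0' * (x - x0') + D*(r*D - R*s^2) * (x0' - x)" for x x0'
    unfolding k_def Q_def P_def using kquad[OF D_def] by simp
  have deriv: "\<exists>y. (f has_real_derivative y) (at z) \<and> y * ((s^2+4*r*z) * Q z * P z) = 4 * k z"
    if z: "0 < z" "0 < Q z" for z
  proof -
    have P0: "0 < P z" using z PQ by simp
    have S0: "0 < s^2+4*r*z" using z r1 s by (simp add: add_pos_pos)
    have d: "(f has_real_derivative (4*r/(s^2+4*r*z) + R*(2*(r-1)/Q z - 2*(r+1)/P z))) (at z)"
      using z P0 S0 unfolding f_def Q_def P_def
      apply (intro derivative_eq_intros refl)
      apply simp_all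
      apply simp_all
      done
    have "(4*r/(s^2+4*r*z) + R*(2*(r-1)/Q z - 2*(r+1)/P z)) * ((s^2+4*r*z) * Q z * P z)
       = 4*r*Q z*P z + R*(2*(r-1)*P z - 2*(r+1)*Q z)*(s^2+4*r*z)"
      using z P0 S0 frac_aux[of "s^2+4*r*z" "Q z" "P z" "4*r" R "2*(r-1)" "2*(r+1)"] by simp
    also have "2*(r-1)*P z - 2*(r+1)*Q z = -4*D" unfolding P_def Q_def D_def by (simp add: algebra_simps)
    also have "4*r*Q z*P z + R*(-4*D)*(s^2+4*r*z) = 4 * k z" unfolding k_def by (simp add: algebra_simps)
    finally show ?thesis using d by blast
  qed
  have S0: "0 < s^2+4*r*x" if "0 < x" for x using that r1 s by (simp add: add_pos_pos)
  have ppos: "0 < (s^2+4*r*z) * Q z * P z" if "0 < z" "0 < Q z" for z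
    using that S0[of z] PQ[of z] by simp
  have "f x0 < 0"
  proof (cases "k x0 \<ge> 0")
    case True
    have kpos: "k z \<ge> 0" if z: "x0 \<le> z" "z \<le> r+s" for z
    proof (cases "D < 0")
      case True
      have "Q z > 0" using Qmono[OF z(1)] Qx0 unfolding Q_def by simp
      then have "r*Q z*P z > 0" using PQ[of z] z x0 r1 by simp
      moreover have "R*D*(s^2+4*r*z) < 0"
      proof -
        have "R*D < 0" using True R r1 by (intro mult_pos_neg) auto
        then show ?thesis using mult_neg_pos[of "R*D" "s^2+4*r*z"] S0[of z] z x0 by auto
      qed
      ultimately show ?thesis unfolding k_def by linarith
    next
      case False
      have "D*(r*D - R*s^2) \<le> 0"
      proof -
        have "r*D - R*s^2 \<le> 0"
        proof -
          have "1 \<le> r^2" using r1 by (simp add: one_le_power)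
          then have "D \<le> s^2" unfolding D_def by simp
          then have "r*D \<le> r*s^2" using r1 by (intro mult_left_mono) auto
          moreover have "r*s^2 \<le> R*s^2" using R r1 by (intro mult_right_mono) auto
          ultimately show ?thesis by linarith
        qed
        then show ?thesis using False by (simp add: mult_nonneg_nonpos)
      qed
      then have "D*(r*D - R*s^2) * (x0 - z) \<ge> 0" using z by (simp add: mult_nonpos_nonpos)
      moreover have "4*r*(r-1)*(r+1) * z * x0 * (z - x0) \<ge> 0" using z x0 r1 by simp
      ultimately have "x0 * k z \<ge> z * k x0" using kid[of x0 z] by linarith
      moreover have "z * k x0 \<ge> 0" using True z x0 by simp
      ultimately have "x0 * k z \<ge> 0" by linarith
      then show ?thesis using x0 by (auto simp: zero_le_mult_iff)
    qed
    have "f x0 \<le> f (r+s)"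
    proof (rule DERIV_nonneg_imp_nondecreasing[of x0 "r+s" f, OF x0(2)])
      fix z assume z: "x0 \<le> z" "z \<le> r+s"
      have zp: "0 < z" "0 < Q z" using z x0 Qmono[OF z(1)] Qx0 unfolding Q_def by auto
      obtain y where y: "(f has_real_derivative y) (at z)" "y * ((s^2+4*r*z) * Q z * P z) = 4 * k z"
        using deriv[OF zp] by blast
      have "y = 4 * k z / ((s^2+4*r*z) * Q z * P z)" using y(2) ppos[OF zp] by (intro divaux) auto
      then have "y \<ge> 0" using kpos[OF z] ppos[OF zp] by simp
      then show "\<exists>y. (f has_real_derivative y) (at z) \<and> 0 \<le> y" using y by blast
    qed
    also have "f (r+s) < 0"
    proof -
      have a1: "s^2+4*r*(r+s) = (r+s+r)^2" by (simp add: algebra_simps power2_eq_square)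
      have a2: "Q (r+s) = (r+s-1)^2" unfolding Q_def by (simp add: algebra_simps power2_eq_square)
      have a3: "P (r+s) = (r+s+1)^2" unfolding P_def by (simp add: algebra_simps power2_eq_square)
      have "f (r+s) = 2*((ln(r+s+r) - ln s) - R*(ln(r+s+1) - ln(r+s-1)))"
        unfolding f_def a1 a2 a3 using r1 s by (simp add: ln_realpow algebra_simps)
      then show ?thesis using gneg by simp
    qed
    finally show ?thesis .
  next
    case False
    have D0: "D \<ge> 0"
    proof (rule ccontr)
      assume "\<not> D \<ge> 0"
      then have "D < 0" by simp
      moreover have "r*Q x0*P x0 > 0" using PQ[of x0] Qx0 x0 r1 unfolding Q_def by simp
      moreover have "R*D*(s^2+4*r*x0) < 0"
      proof -
        have "R*D < 0" using \<open>D<0\<close> R r1 by (intro mult_pos_neg) auto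
        then show ?thesis using mult_neg_pos[of "R*D" "s^2+4*r*x0"] S0[of x0] x0 by auto
      qed
      ultimately show False using False unfolding k_def by linarith
    qed
    have Q1: "0 < Q 1"
    proof -
      have "(r-1)^2 < r^2 - 1" using r1 by (simp add: power2_eq_square algebra_simps)
      then show ?thesis using D0 unfolding Q_def D_def by (simp add: power2_eq_square algebra_simps)
    qed
    have kneg: "k z < 0" if z: "1 \<le> z" "z \<le> x0" for z
    proof (rule ccontr)
      assume "\<not> k z < 0"
      then have kz: "k z \<ge> 0" by simp
      have "D*(r*D - R*s^2) \<le> 0"
      proof -
        have "r*D - R*s^2 \<le> 0"
        proof -
          have "1 \<le> r^2" using r1 by (simp add: one_le_power)
          then have "D \<le> s^2" unfolding D_def by simp
          then have "r*D \<le> r*s^2" using r1 by (intro mult_left_mono) auto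
          moreover have "r*s^2 \<le> R*s^2" using R r1 by (intro mult_right_mono) auto
          ultimately show ?thesis by linarith
        qed
        then show ?thesis using D0 by (simp add: mult_nonneg_nonpos)
      qed
      then have "D*(r*D - R*s^2) * (z - x0) \<ge> 0" using z by (simp add: mult_nonpos_nonpos)
      moreover have "4*r*(r-1)*(r+1) * x0 * z * (x0 - z) \<ge> 0" using z x0 r1 by simp
      ultimately have "z * k x0 \<ge> x0 * k z" using kid[of z x0] by linarith
      moreover have "x0 * k z \<ge> 0" using kz x0 by simp
      ultimately have "z * k x0 \<ge> 0" by linarith
      then show False using False z by (simp add: zero_le_mult_iff)
    qed
    have "f x0 \<le> f 1"
    proof (rule DERIV_nonpos_imp_nonincreasing[of 1 x0 f])
      show "1 \<le> x0" using x0 by simp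
      fix z assume z: "1 \<le> z" "z \<le> x0"
      have zp: "0 < z" "0 < Q z" using z Qmono[OF z(1)] Q1 by auto
      obtain y where y: "(f has_real_derivative y) (at z)" "y * ((s^2+4*r*z) * Q z * P z) = 4 * k z"
        using deriv[OF zp] by blast
      have "y = 4 * k z / ((s^2+4*r*z) * Q z * P z)" using y(2) ppos[OF zp] by (intro divaux) auto
      then have "y \<le> 0" using kneg[OF z] ppos[OF zp] by (simp add: divide_nonpos_pos)
      then show "\<exists>y. (f has_real_derivative y) (at z) \<and> y \<le> 0" using y by blast
    qed
    also have "f 1 < 0"
    proof -
      have s2: "s^2 > 0" using s by simp
      have e1: "ln(s^2+4*r*1) - ln(s^2) = ln(1 + r*(4/s^2))"
      proof -
        have "1 + r*(4/s^2) = (s^2+4*r*1)/s^2" using s2 by (simp add: field_simps)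
        moreover have "s^2+4*r*1 > 0" using s2 r1 by (simp add: add_pos_pos)
        ultimately show ?thesis using s2 by (simp add: ln_div)
      qed
      have b1: "ln(1 + r*(4/s^2)) \<le> r * ln(1+4/s^2)" using ln_bern[of "4/s^2" r] r1 s2 by simp
      have QP1: "P 1 = Q 1 + 4" using PQ[of 1] by simp
      have e2: "ln (Q 1) - ln (P 1) = - ln(1 + 4/Q 1)"
      proof -
        have "1 + 4/Q 1 = P 1/Q 1" using Q1 unfolding QP1 by (simp add: field_simps)
        moreover have "P 1 > 0" using Q1 QP1 by simp
        ultimately show ?thesis using Q1 by (simp add: ln_div)
      qed
      have Qs: "Q 1 < s^2" unfolding Q_def using r1 mult_pos_pos[of "r-1" "r-1"] by (simp add: power2_eq_square algebra_simps)
      have q4: "4/s^2 > 0" using s2 by simp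
      have A0: "0 < ln(1+4/s^2)" using q4 by (intro ln_gt_zero) simp
      have "4/s^2 < 4/Q 1" using Qs Q1 s2 by (intro divide_strict_left_mono) auto
      then have AB: "ln(1+4/s^2) < ln(1 + 4/Q 1)" using q4 by (subst ln_less_cancel_iff; linarith)
      have "r * ln(1+4/s^2) < R * ln(1 + 4/Q 1)"
        using AB A0 R r1 by (intro mult_strict_mono) auto
      then show ?thesis unfolding f_def e2 using e1 b1 by simp
    qed
    finally show ?thesis .
  qed
  then show ?thesis unfolding f_def Q_def P_def .
qed



lemma cm2: fixes z :: complex shows "(cmod z)^2 = (Re z)^2 + (Im z)^2"
  by (simp add: cmod_power2)

theorem lemma4p12:
  fixes d a b :: nat and x1 :: real and t :: complex
  assumes "d > 0" "a > 0" "b > 0"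
    and "Rpar d a \<ge> 3 * rpar d b"
    and "x1 > rpar d b" and "Phi d a b (complex_of_real x1) = 0"
    and "Re t > 1" and "Im t \<ge> 0"
    and "cmod (t - complex_of_real (rpar d b)) > x1 - rpar d b"
  shows "Phi d a b t < 0"
proof -
  define r where "r = rpar d b"
  define R where "R = Rpar d a"
  define s where "s = cmod (t - complex_of_real r)"
  define x where "x = Re t"
  define y where "y = Im t"
  have dpos: "real d > 0" using assms by simp
  have r1: "1 < r" unfolding r_def rpar_def using assms by (simp add: field_simps)
  have RR: "3*r \<le> R" using assms unfolding r_def R_def by simp
  have ad: "real a + real d = R * real d" unfolding R_def Rpar_def using dpos by simp
  have x1r: "r < x1" using assms unfolding r_def by simp
  have sr: "x1 - r < s" using assms unfolding r_def s_def by simp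
  have s0: "0 < s" using sr x1r by simp
  have x1': "1 < x" unfolding x_def using assms by simp
  have h: "ln(x1+r)-ln(x1-r) = R*(ln(x1+1)-ln(x1-1))"
  proof -
    have c1: "cmod (complex_of_real x1 + complex_of_real r) = x1 + r" using x1r r1
      by (metis abs_of_pos add_pos_pos less_trans norm_of_real of_real_add zero_less_one)
    have c2: "cmod (complex_of_real x1 - complex_of_real r) = x1 - r" using x1r
      by (metis abs_of_pos diff_gt_0_iff_gt norm_of_real of_real_diff)
    have c3: "cmod (complex_of_real x1 - 1) = x1 - 1" using x1r r1
      by (metis abs_of_pos diff_gt_0_iff_gt less_trans norm_of_real of_real_1 of_real_diff)
    have c4: "cmod (complex_of_real x1 + 1) = x1 + 1" using x1r r1
      by (metis abs_of_pos add_pos_pos less_trans norm_of_real of_real_1 of_real_add zero_less_one)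
    have "0 = Phi d a b (complex_of_real x1)" using assms by simp
    also have "\<dots> = real d * (ln(x1+r)-ln(x1-r) - R*(ln(x1+1)-ln(x1-1)))"
      unfolding Phi_def r_def[symmetric] c1 c2 c3 c4 ad by (simp add: algebra_simps)
    finally show ?thesis using dpos by simp
  qed
  have gneg: "ln(r+s+r) - ln s < R*(ln(r+s+1) - ln(r+s-1))"
    using g_neg[of r x1 "r+s" R] r1 x1r sr h by simp
  have s2: "s^2 = (x-r)^2 + y^2" unfolding s_def x_def y_def by (simp add: cm2)
  have e1: "(cmod (t + complex_of_real r))^2 = s^2 + 4*r*x"
    unfolding s2 cm2 by (simp add: x_def y_def power2_eq_square algebra_simps)
  have e2: "(cmod (t - 1))^2 = s^2 + 2*(r-1)*x - (r^2-1)"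
    unfolding s2 cm2 by (simp add: x_def y_def power2_eq_square algebra_simps)
  have e3: "(cmod (t + 1))^2 = s^2 + 2*(r+1)*x - (r^2-1)"
    unfolding s2 cm2 by (simp add: x_def y_def power2_eq_square algebra_simps)
  have n1: "cmod (t + complex_of_real r) > 0"
  proof -
    have "Re (t + complex_of_real r) > 0" using x1' r1 unfolding x_def by simp
    then show ?thesis by (metis abs_Re_le_cmod abs_of_pos order_less_le_trans)
  qed
  have n2: "cmod (t - 1) > 0"
  proof -
    have "Re (t - 1) > 0" using x1' unfolding x_def by simp
    then show ?thesis by (metis abs_Re_le_cmod abs_of_pos order_less_le_trans)
  qed
  have n3: "cmod (t + 1) > 0"
  proof -
    have "Re (t + 1) > 0" using x1' unfolding x_def by simp
    then show ?thesis by (metis abs_Re_le_cmod abs_of_pos order_less_le_trans)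
  qed
  have xle: "x \<le> r + s"
  proof -
    have "\<bar>Re (t - complex_of_real r)\<bar> \<le> s" unfolding s_def by (rule abs_Re_le_cmod)
    then show ?thesis unfolding x_def by simp
  qed
  have Qx: "0 < s^2 + 2*(r-1)*x - (r^2-1)" using e2 n2 by (metis zero_less_power)
  have main: "ln(s^2+4*r*x) - ln(s^2) + R*(ln(s^2 + 2*(r-1)*x - (r^2-1)) - ln(s^2 + 2*(r+1)*x - (r^2-1))) < 0"
    by (rule circle[OF r1 RR s0 x1' xle Qx gneg])
  have l1: "ln(s^2+4*r*x) = 2*ln(cmod (t + complex_of_real r))" using n1 unfolding e1[symmetric] by (simp add: ln_realpow)
  have l2: "ln(s^2) = 2*ln s" using s0 by (simp add: ln_realpow)
  have l3: "ln(s^2 + 2*(r-1)*x - (r^2-1)) = 2*ln(cmod (t - 1))" using n2 unfolding e2[symmetric] by (simp add: ln_realpow)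
  have l4: "ln(s^2 + 2*(r+1)*x - (r^2-1)) = 2*ln(cmod (t + 1))" using n3 unfolding e3[symmetric] by (simp add: ln_realpow)
  have "Phi d a b t = real d * (ln(cmod (t + complex_of_real r)) - ln s + R*(ln(cmod (t - 1)) - ln(cmod (t + 1))))"
    unfolding Phi_def r_def[symmetric] s_def[symmetric] ad by (simp add: algebra_simps)
  also have "\<dots> = real d / 2 * (ln(s^2+4*r*x) - ln(s^2) + R*(ln(s^2 + 2*(r-1)*x - (r^2-1)) - ln(s^2 + 2*(r+1)*x - (r^2-1))))"
    unfolding l1 l2 l3 l4 by (simp add: algebra_simps)
  also have "\<dots> < 0" using main dpos by (simp add: mult_pos_neg)
  finally show ?thesis .
qed

end
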